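(* Consider the queueing system in the context under the MaxWeight policy with a diagonal matrix $\Delta$ with positive diagonal entries, in overload ($\rho\notin\mathcal{P}$). Let $H=\limsup_{t\to\infty}\langle \frac{X(t)}{t},\Delta\frac{X(t)}{t}\rangle$, and let $\{t_c\}$ be an increasing unbounded sequence with $\lim_{c\to\infty}X(t_c)/t_c=\eta$ and $\langle\eta,\Delta\eta\rangle=H$. Then there is no increasing unbounded sequence $\{t_a\}$ with $\lim_{a\to\infty}X(t_a)/t_a=\psi\ne\eta$. Therefore $\lim_{t\to\infty}X(t)/t=\eta$.
   Context: Model: $Q$ queues, finite set $\mathcal{S}=\{S_1,\dots,S_N\}\subset\mathbb{R}^Q_{\ge0}$ of service vectors, discrete time. Arrivals $A(t)$ with $0\le A_q(t)\le\bar A_q<\infty$ and $\rho_q=\lim_{t\to\infty}\frac1t\sum_{s=0}^{t-1}A_q(s)\in(0,\infty)$. Departures $D_q(t)=\min\{S_q(t),X_q(t)\}$, $X(t+1)=X(t)+A(t)-D(t)$, $X(0)=0$, with $S(t)\in\arg\max_{S\in\mathcal{S}}\langle S,\Delta X(t)\rangle$ (MaxWeight). Stability region $\mathcal{P}=\{r\in\mathbb{R}^Q_{\ge0}: r\le\sum_n\alpha_nS_n\text{ for some }\alpha_n\ge0,\sum_n\alpha_n=1\}$. *)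

theory Defs
  imports "HOL-Analysis.Analysis"
begin

definition stability_region :: "(real^'q::finite) set \<Rightarrow> (real^'q) set" where
  "stability_region SS = {r. (\<forall>q. 0 \<le> r $ q) \<and>
     (\<exists>\<alpha>. (\<forall>s\<in>SS. 0 \<le> \<alpha> s) \<and> (\<Sum>s\<in>SS. \<alpha> s) = 1 \<and>
          (\<forall>q. r $ q \<le> (\<Sum>s\<in>SS. \<alpha> s * s $ q)))}"

definition diag_app :: "real^'q::finite \<Rightarrow> real^'q \<Rightarrow> real^'q" where
  "diag_app \<delta> x = (\<chi> q. \<delta> $ q * x $ q)"

end

theory Submission
  imports Defs
begin


lemma gron_step:
  fixes w e :: "nat \<Rightarrow> real"
  assumes w0: "\<forall>t. 0 \<le> w t" and c0: "0 \<le> c" and K00: "0 \<le> K0"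
    and rec: "\<forall>t. (w (Suc t))\<^sup>2 \<le> (w t)\<^sup>2 + 2 * c * w t + e t + K0"
    and e_small: "\<forall>\<epsilon>>0. eventually (\<lambda>t. e t \<le> \<epsilon> * real t) sequentially"
    and K: "0 \<le> K" and eps: "0 < \<epsilon>"
    and ev: "eventually (\<lambda>t. w t \<le> K * real t) sequentially"
  shows "eventually (\<lambda>t. w t \<le> sqrt (c * K + \<epsilon>) * real t) sequentially"
proof -
  obtain T1 where T1: "\<forall>t\<ge>T1. w t \<le> K * real t" using ev by (auto simp: eventually_sequentially)
  obtain T2 where T2: "\<forall>t\<ge>T2. e t \<le> \<epsilon> * real t" using e_small eps by (auto simp: eventually_sequentially)
  define T0 where "T0 = max T1 T2"
  define W where "W = (w T0)\<^sup>2"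
  have main: "(w T)\<^sup>2 \<le> W + (c * K + \<epsilon>/2) * (real T)\<^sup>2 + K0 * real T" if "T \<ge> T0" for T
    using that
  proof (induction T rule: dec_induct)
    case base
    have "0 \<le> (c * K + \<epsilon>/2) * (real T0)\<^sup>2 + K0 * real T0"
      using c0 K eps K00 by (intro add_nonneg_nonneg mult_nonneg_nonneg) auto
    then show ?case by (simp add: W_def)
  next
    case (step n)
    have wn: "w n \<le> K * real n" using T1 step.hyps(1) T0_def by auto
    have en: "e n \<le> \<epsilon> * real n" using T2 step.hyps(1) T0_def by auto
    have cw: "c * w n \<le> c * (K * real n)" using wn c0 by (simp add: mult_left_mono)
    have "(w (Suc n))\<^sup>2 \<le> (w n)\<^sup>2 + 2 * c * w n + e n + K0" using rec by auto
    also have "\<dots> \<le> W + (c * K + \<epsilon>/2) * (real n)\<^sup>2 + K0 * real n + 2 * c * (K * real n) + \<epsilon> * real n + K0"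
      using step.IH cw en by linarith
    also have "\<dots> \<le> W + (c * K + \<epsilon>/2) * (real (Suc n))\<^sup>2 + K0 * real (Suc n)"
    proof -
      have "0 \<le> (c*K + \<epsilon>/2)" using c0 K eps by auto
      then show ?thesis by (simp add: power2_eq_square algebra_simps)
    qed
    finally show ?case .
  qed
  obtain N :: nat where N: "2 * (K0 + W) / \<epsilon> + 1 < real N" using reals_Archimedean2 by blast
  have W0: "0 \<le> W" by (simp add: W_def)
  show ?thesis unfolding eventually_sequentially
  proof (intro exI[of _ "max T0 N"] allI impI)
    fix T assume T: "max T0 N \<le> T"
    have TN: "real N \<le> real T" using T by auto
    have "0 \<le> 2 * (K0 + W) / \<epsilon>" using W0 K00 eps by simp
    then have T1': "1 \<le> real T" using N TN by linarith
    have "W \<le> W * real T" using T1' W0 by (simp add: mult_le_cancel_left1)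
    then have "K0 * real T + W \<le> (K0 + W) * real T" by (simp add: algebra_simps)
    also have "\<dots> \<le> (\<epsilon>/2 * real N) * real T"
    proof (rule mult_right_mono)
      have "2 * (K0 + W) / \<epsilon> \<le> real N" using N by linarith
      then have "2 * (K0 + W) \<le> real N * \<epsilon>" using eps by (simp add: divide_le_eq)
      then show "K0 + W \<le> \<epsilon>/2 * real N" by (simp add: algebra_simps)
    qed (use T1' in auto)
    also have "\<dots> \<le> \<epsilon>/2 * (real T)\<^sup>2" using TN eps T1'
      by (simp add: power2_eq_square mult_right_mono)
    finally have a: "K0 * real T + W \<le> \<epsilon>/2 * (real T)\<^sup>2" .
    have "(w T)\<^sup>2 \<le> (c * K + \<epsilon>) * (real T)\<^sup>2" using main[of T] a T by (auto simp: algebra_simps)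
    then have "w T \<le> sqrt ((c * K + \<epsilon>) * (real T)\<^sup>2)" by (rule real_le_rsqrt)
    then show "w T \<le> sqrt (c * K + \<epsilon>) * real T" by (simp add: real_sqrt_mult)
  qed
qed

lemma gron:
  fixes w e :: "nat \<Rightarrow> real"
  assumes w0: "\<forall>t. 0 \<le> w t" and c0: "0 \<le> c" and K00: "0 \<le> K0"
    and rec: "\<forall>t. (w (Suc t))\<^sup>2 \<le> (w t)\<^sup>2 + 2 * c * w t + e t + K0"
    and e_small: "\<forall>\<epsilon>>0. eventually (\<lambda>t. e t \<le> \<epsilon> * real t) sequentially"
    and B: "\<forall>t. w t \<le> B * real t"
    and eps: "0 < \<epsilon>"
  shows "eventually (\<lambda>t. w t \<le> (c + \<epsilon>) * real t) sequentially"
proof -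
  define LS where "LS = {K. eventually (\<lambda>t. w t \<le> K * real t) sequentially}"
  have BL: "B \<in> LS" using B by (simp add: LS_def)
  have nonneg: "0 \<le> K" if KL: "K \<in> LS" for K
  proof -
    obtain N where N: "\<forall>t\<ge>N. w t \<le> K * real t" using KL by (auto simp: LS_def eventually_sequentially)
    have "w (Suc N) \<le> K * real (Suc N)" using N le_SucI by blast
    then have "0 \<le> K * real (Suc N)" using w0 by (meson order.trans)
    then show ?thesis by (simp add: zero_le_mult_iff)
  qed
  have up: "K' \<in> LS" if "K \<in> LS" "K \<le> K'" for K K'
  proof -
    have "eventually (\<lambda>t. w t \<le> K * real t) sequentially" using that by (simp add: LS_def)
    then have "eventually (\<lambda>t. w t \<le> K' * real t) sequentially"
      proof eventually_elim
        case (elim t)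
        have "K * real t \<le> K' * real t" using that(2) by (simp add: mult_right_mono)
        then show ?case using elim by linarith
      qed
    then show ?thesis by (simp add: LS_def)
  qed
  have ne: "LS \<noteq> {}" using BL by auto
  have bdd: "bdd_below LS" using nonneg by (auto simp: bdd_below_def)
  define L where "L = Inf LS"
  have L0: "0 \<le> L" unfolding L_def using ne nonneg by (intro cInf_greatest) auto
  have Leps: "L + d \<in> LS" if "d > 0" for d
  proof -
    have "Inf LS < L + d" using that L_def by simp
    then obtain K where "K \<in> LS" "K < L + d" using cInf_less_iff[OF ne bdd] by auto
    then show ?thesis using up by auto
  qed
  have sq: "L\<^sup>2 \<le> c * L + d * (c + 1)" if d: "d > 0" for d
  proof -
    have "sqrt (c * (L + d) + d) \<in> LS"
      using gron_step[OF w0 c0 K00 rec e_small, of "L + d" d] Leps[OF d] L0 d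
      by (simp add: LS_def)
    then have "L \<le> sqrt (c * (L + d) + d)" unfolding L_def using bdd by (rule cInf_lower)
    then have "L\<^sup>2 \<le> (sqrt (c * (L + d) + d))\<^sup>2" using L0 by (simp add: power_mono)
    also have "\<dots> = c * (L + d) + d" using c0 L0 d by simp
    finally show ?thesis by (simp add: algebra_simps)
  qed
  have "L\<^sup>2 \<le> c * L"
  proof (rule field_le_epsilon)
    fix d :: real assume d: "0 < d"
    have "L\<^sup>2 \<le> c * L + d / (c + 1) * (c + 1)" using sq[of "d / (c+1)"] d c0 by simp
    then show "L\<^sup>2 \<le> c * L + d" using c0 by simp
  qed
  then have Lc: "L \<le> c"
  proof -
    assume h: "L\<^sup>2 \<le> c * L"
    show "L \<le> c"
    proof (rule ccontr)
      assume "\<not> L \<le> c"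
      then have "c < L" by simp
      then have "c * L < L * L" using L0 c0 by (simp add: mult_strict_right_mono)
      then show False using h by (simp add: power2_eq_square)
    qed
  qed
  have "c + \<epsilon> \<in> LS" using up[OF Leps[OF eps]] Lc by simp
  then show ?thesis by (simp add: LS_def)
qed



definition Tr :: "real^'q::finite \<Rightarrow> real^'q \<Rightarrow> real^'q" where
  "Tr \<delta> x = (\<chi> q. sqrt (\<delta> $ q) * x $ q)"

lemma Tr_inner:
  assumes "\<forall>q. 0 < \<delta> $ q"
  shows "x \<bullet> diag_app \<delta> y = Tr \<delta> x \<bullet> Tr \<delta> y"
proof -
  have h: "sqrt (\<delta> $ q) * sqrt (\<delta> $ q) = \<delta> $ q" for q
    using assms by (simp add: less_imp_le)
  have h2: "x $ q * (\<delta> $ q * y $ q) = (sqrt (\<delta> $ q) * x $ q) * (sqrt (\<delta> $ q) * y $ q)" for q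
  proof -
    have "(sqrt (\<delta> $ q) * x $ q) * (sqrt (\<delta> $ q) * y $ q) = (sqrt (\<delta> $ q) * sqrt (\<delta> $ q)) * (x $ q * y $ q)"
      by (simp only: mult_ac)
    also have "\<dots> = x $ q * (\<delta> $ q * y $ q)" by (simp only: h mult_ac)
    finally show ?thesis by (rule sym)
  qed
  show ?thesis unfolding inner_vec_def Tr_def diag_app_def
    by (rule sum.cong) (simp_all add: h2)
qed

lemma Tr_add: "Tr \<delta> (x + y) = Tr \<delta> x + Tr \<delta> y"
  by (simp add: Tr_def vec_eq_iff algebra_simps)
lemma Tr_diff: "Tr \<delta> (x - y) = Tr \<delta> x - Tr \<delta> y"
  by (simp add: Tr_def vec_eq_iff algebra_simps)
lemma Tr_scaleR: "Tr \<delta> (c *\<^sub>R x) = c *\<^sub>R Tr \<delta> x"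
  by (simp add: Tr_def vec_eq_iff algebra_simps)

lemma Tr_bl: "bounded_linear (Tr \<delta>)"
proof -
  have "linear (Tr \<delta>)" by (intro linearI) (simp_all add: Tr_add Tr_scaleR)
  then show ?thesis by (simp add: linear_conv_bounded_linear)
qed

lemma Tr_sum: "Tr \<delta> (\<Sum>s\<in>S. f s) = (\<Sum>s\<in>S. Tr \<delta> (f s))"
  by (rule linear_sum[OF bounded_linear.linear[OF Tr_bl]])

lemma Tr_zero:
  assumes "\<forall>q. 0 < \<delta> $ q" "Tr \<delta> x = 0"
  shows "x = 0"
proof -
  have "\<forall>q. sqrt (\<delta> $ q) * x $ q = 0" using assms(2) by (simp add: Tr_def vec_eq_iff)
  then show ?thesis using assms(1) by (simp add: vec_eq_iff) (metis less_irrefl real_sqrt_gt_zero mult_eq_0_iff)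
qed


lemma subseq_conv:
  fixes f :: "nat \<Rightarrow> real^'q::finite"
  assumes bnd: "bounded (range f)"
    and sub: "\<And>r l. strict_mono r \<Longrightarrow> (f \<circ> r) \<longlonglongrightarrow> l \<Longrightarrow> l = \<eta>"
  shows "f \<longlonglongrightarrow> \<eta>"
proof (rule ccontr)
  assume "\<not> f \<longlonglongrightarrow> \<eta>"
  then obtain \<epsilon> where eps: "\<epsilon> > 0" and ne: "\<not> eventually (\<lambda>n. dist (f n) \<eta> < \<epsilon>) sequentially"
    by (auto simp: tendsto_iff)
  obtain r1 :: "nat \<Rightarrow> nat" where r1: "strict_mono r1" "\<forall>n. \<not> dist (f (r1 n)) \<eta> < \<epsilon>"
    using not_eventually_sequentiallyD[OF ne] by blast
  have "bounded (range (f \<circ> r1))" using bnd by (rule bounded_subset) auto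
  then obtain l r2 where r2: "strict_mono r2" "((f \<circ> r1) \<circ> r2) \<longlonglongrightarrow> l"
    using bounded_imp_convergent_subsequence by blast
  have sm: "strict_mono (r1 \<circ> r2)" using r1(1) r2(1) by (rule strict_mono_o)
  have "l = \<eta>" using sub[OF sm] r2(2) by (simp add: o_assoc)
  then have "(\<lambda>n. dist (f (r1 (r2 n))) \<eta>) \<longlonglongrightarrow> dist \<eta> \<eta>"
    using r2(2) by (intro tendsto_dist) (auto simp: o_def)
  then have "\<epsilon> \<le> dist \<eta> \<eta>"
    using r1(2) by (intro tendsto_lowerbound) (auto simp: not_less)
  then show False using eps by simp
qed



theorem proposition1:
  fixes SS :: "(real^'q::finite) set"
    and \<delta> :: "real^'q" and Abar \<rho> \<eta> :: "real^'q"
    and A Sch X :: "nat \<Rightarrow> real^'q"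
    and tc :: "nat \<Rightarrow> nat"
  assumes SS_fin: "finite SS" and SS_ne: "SS \<noteq> {}"
    and SS_nonneg: "\<forall>s\<in>SS. \<forall>q. 0 \<le> s $ q"
    and delta_pos: "\<forall>q. 0 < \<delta> $ q"
    and A_bnd: "\<forall>t q. 0 \<le> A t $ q \<and> A t $ q \<le> Abar $ q"
    and rho_lim: "\<forall>q. (\<lambda>t. (\<Sum>s<t. A s $ q) / real t) \<longlonglongrightarrow> \<rho> $ q"
    and rho_pos: "\<forall>q. 0 < \<rho> $ q"
    and X0: "X 0 = 0"
    and X_step: "\<forall>t. X (Suc t) = X t + A t - (\<chi> q. min (Sch t $ q) (X t $ q))"
    and maxweight: "\<forall>t. Sch t \<in> SS \<and>
                      (\<forall>s\<in>SS. s \<bullet> diag_app \<delta> (X t) \<le> Sch t \<bullet> diag_app \<delta> (X t))"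
    and overload: "\<rho> \<notin> stability_region SS"
    and tc_mono: "mono tc" and tc_unbdd: "filterlim tc at_top sequentially"
    and tc_lim: "(\<lambda>c. inverse (real (tc c)) *\<^sub>R X (tc c)) \<longlonglongrightarrow> \<eta>"
    and eta_H: "ereal (\<eta> \<bullet> diag_app \<delta> \<eta>) =
       limsup (\<lambda>t. ereal ((inverse (real t) *\<^sub>R X t) \<bullet> diag_app \<delta> (inverse (real t) *\<^sub>R X t)))"
  shows "(\<forall>(ta :: nat \<Rightarrow> nat) \<psi>. mono ta \<and> filterlim ta at_top sequentially \<and>
            (\<lambda>a. inverse (real (ta a)) *\<^sub>R X (ta a)) \<longlonglongrightarrow> \<psi> \<longrightarrow> \<psi> = \<eta>)
         \<and> (\<lambda>t. inverse (real t) *\<^sub>R X t) \<longlonglongrightarrow> \<eta>"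
proof -
  define Smax where "Smax = (\<Sum>s\<in>SS. \<Sum>q\<in>UNIV. s $ q)"
  have Smax: "s $ q \<le> Smax" if "s \<in> SS" for s q
  proof -
    have "s $ q \<le> (\<Sum>q\<in>UNIV. s $ q)" using SS_nonneg that by (intro member_le_sum) auto
    also have "\<dots> \<le> Smax" unfolding Smax_def using SS_nonneg that SS_fin
      by (intro member_le_sum) (auto intro: sum_nonneg)
    finally show ?thesis .
  qed
  have Smax0: "0 \<le> Smax" unfolding Smax_def using SS_nonneg by (auto intro!: sum_nonneg)
  define D where "D t = (\<chi> q. min (Sch t $ q) (X t $ q))" for t
  have X_rec: "X (Suc t) = X t + A t - D t" for t using X_step by (simp add: D_def)
  have Sch_in: "Sch t \<in> SS" for t using maxweight by auto
  have Xnn: "0 \<le> X t $ q" for t q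
  proof (induction t)
    case 0 then show ?case by (simp add: X0)
  next
    case (Suc t)
    have "min (Sch t $ q) (X t $ q) \<le> X t $ q" by simp
    then show ?case using A_bnd[rule_format, of t q] by (simp add: X_rec D_def) linarith
  qed
  have D0: "0 \<le> D t $ q" for t q using Xnn[of t q] SS_nonneg Sch_in[of t] by (simp add: D_def)
  have DS: "D t $ q \<le> Sch t $ q" for t q by (simp add: D_def)
  have DSmax: "D t $ q \<le> Smax" for t q using DS[of t q] Smax[OF Sch_in[of t]] by (meson order.trans)
  have Xsum: "X t = (\<Sum>s<t. A s) - (\<Sum>s<t. D s)" for t
    by (induction t) (simp_all add: X0 X_rec)
  define avgA where "avgA t = inverse (real t) *\<^sub>R (\<Sum>s<t. A s)" for t
  have avgA_lim: "avgA \<longlonglongrightarrow> \<rho>"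
  proof (rule vec_tendstoI)
    fix q
    show "((\<lambda>t. avgA t $ q) \<longlongrightarrow> \<rho> $ q) sequentially"
      using rho_lim by (simp add: avgA_def divide_inverse mult.commute)
  qed
  define Good where "Good x \<longleftrightarrow> (\<forall>w. (\<forall>q. 0 \<le> w $ q) \<longrightarrow> (\<exists>s\<in>SS. w \<bullet> (\<rho> - x) \<le> w \<bullet> s))" for x
  have Good_lim: "Good \<psi>"
    if ta: "filterlim ta at_top sequentially"
      and lim: "(\<lambda>a. inverse (real (ta a)) *\<^sub>R X (ta a)) \<longlonglongrightarrow> \<psi>" for ta :: "nat \<Rightarrow> nat" and \<psi>
    unfolding Good_def
  proof (intro allI impI)
    fix w :: "real^'q" assume w0: "\<forall>q. 0 \<le> w $ q"
    define M where "M = Max ((\<lambda>s. w \<bullet> s) ` SS)"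
    have "M \<in> (\<lambda>s. w \<bullet> s) ` SS" unfolding M_def using SS_fin SS_ne by (intro Max_in) auto
    then obtain s0 where s0: "s0 \<in> SS" "M = w \<bullet> s0" by auto
    have wD: "w \<bullet> D t \<le> M" for t
    proof -
      have "w \<bullet> D t \<le> w \<bullet> Sch t" unfolding inner_vec_def
        using w0 DS by (intro sum_mono) (simp add: mult_left_mono)
      also have "\<dots> \<le> M" unfolding M_def using SS_fin Sch_in by (intro Max_ge) auto
      finally show ?thesis .
    qed
    have key: "w \<bullet> (\<rho> - inverse (real T) *\<^sub>R X T) \<le> w \<bullet> (\<rho> - avgA T) + M" if T: "T > 0" for T
    proof -
      have eq: "\<rho> - inverse (real T) *\<^sub>R X T = (\<rho> - avgA T) + inverse (real T) *\<^sub>R (\<Sum>s<T. D s)"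
        by (simp add: Xsum avgA_def scaleR_diff_right)
      have "w \<bullet> (\<rho> - inverse (real T) *\<^sub>R X T) = w \<bullet> (\<rho> - avgA T) + inverse (real T) * (\<Sum>s<T. w \<bullet> D s)"
        unfolding eq inner_add_right inner_scaleR_right inner_sum_right by simp
      also have "inverse (real T) * (\<Sum>s<T. w \<bullet> D s) \<le> inverse (real T) * (real T * M)"
      proof (rule mult_left_mono)
        show "(\<Sum>s<T. w \<bullet> D s) \<le> real T * M" using sum_bounded_above[of "{..<T}" "\<lambda>s. w \<bullet> D s" M] wD by simp
      qed simp
      also have "inverse (real T) * (real T * M) = M" using T by simp
      finally show ?thesis by simp
    qed
    have l1: "(\<lambda>a. w \<bullet> (\<rho> - inverse (real (ta a)) *\<^sub>R X (ta a))) \<longlonglongrightarrow> w \<bullet> (\<rho> - \<psi>)"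
      by (intro tendsto_intros lim)
    have "(\<lambda>a. avgA (ta a)) \<longlonglongrightarrow> \<rho>" using filterlim_compose[OF avgA_lim ta] .
    then have l2: "(\<lambda>a. w \<bullet> (\<rho> - avgA (ta a)) + M) \<longlonglongrightarrow> w \<bullet> (\<rho> - \<rho>) + M"
      by (intro tendsto_intros)
    have ev: "eventually (\<lambda>a. ta a > 0) sequentially"
      using eventually_compose_filterlim[OF eventually_gt_at_top[of 0] ta] .
    have "w \<bullet> (\<rho> - \<psi>) \<le> w \<bullet> (\<rho> - \<rho>) + M"
      by (rule tendsto_le[OF _ l2 l1]) (use ev key in \<open>auto elim: eventually_mono\<close>)
    then show "\<exists>s\<in>SS. w \<bullet> (\<rho> - \<psi>) \<le> w \<bullet> s" using s0 by auto
  qed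
  have diag_diff: "diag_app \<delta> (a - b) = diag_app \<delta> a - diag_app \<delta> b" for a b
    by (simp add: diag_app_def vec_eq_iff algebra_simps)
  have diag_add: "diag_app \<delta> (a + b) = diag_app \<delta> a + diag_app \<delta> b" for a b
    by (simp add: diag_app_def vec_eq_iff algebra_simps)
  have diag_sym: "a \<bullet> diag_app \<delta> b = diag_app \<delta> a \<bullet> b" for a b
    by (simp add: diag_app_def inner_vec_def mult_ac)
  define Y where "Y t = (\<Sum>s<t. \<rho> - D s)" for t
  define E where "E t = (\<Sum>s<t. A s - \<rho>)" for t
  have XYE: "X t = Y t + E t" for t
    by (simp add: Xsum Y_def E_def sum_subtractf)
  define C2 where "C2 = (\<Sum>q\<in>UNIV. \<delta> $ q * (Smax * Smax))"
  define C3 where "C3 = (\<Sum>q\<in>UNIV. sqrt (\<delta> $ q) * (\<bar>\<rho> $ q\<bar> + Smax))"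
  have C3nn: "0 \<le> C3" unfolding C3_def using delta_pos Smax0 by (intro sum_nonneg) (simp add: less_imp_le)
  have C2nn: "0 \<le> C2" unfolding C2_def using delta_pos Smax0 by (intro sum_nonneg) (simp add: less_imp_le)
  have normTrD: "norm (Tr \<delta> (\<rho> - D t)) \<le> C3" for t
  proof -
    have "norm (Tr \<delta> (\<rho> - D t)) \<le> (\<Sum>q\<in>UNIV. \<bar>Tr \<delta> (\<rho> - D t) $ q\<bar>)" by (rule norm_le_l1_cart)
    also have "\<dots> \<le> C3" unfolding C3_def
    proof (rule sum_mono)
      fix q
      have "\<bar>\<rho> $ q - D t $ q\<bar> \<le> \<bar>\<rho> $ q\<bar> + Smax" using D0[of t q] DSmax[of t q] by linarith
      then show "\<bar>Tr \<delta> (\<rho> - D t) $ q\<bar> \<le> sqrt (\<delta> $ q) * (\<bar>\<rho> $ q\<bar> + Smax)"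
        using delta_pos by (simp add: Tr_def abs_mult less_imp_le mult_left_mono)
    qed
    finally show ?thesis .
  qed
  have XSD: "X t \<bullet> diag_app \<delta> (Sch t - D t) \<le> C2" for t
    unfolding inner_vec_def C2_def
  proof (rule sum_mono)
    fix q
    have dq: "0 < \<delta> $ q" using delta_pos by auto
    show "X t $ q \<bullet> diag_app \<delta> (Sch t - D t) $ q \<le> \<delta> $ q * (Smax * Smax)"
    proof (cases "X t $ q \<le> Sch t $ q")
      case True
      then have "D t $ q = X t $ q" by (simp add: D_def)
      moreover have "X t $ q * (Sch t $ q - X t $ q) \<le> Smax * Smax"
        using True Xnn[of t q] Smax[OF Sch_in[of t], of q]
        by (intro mult_mono) auto
      ultimately show ?thesis using dq
        by (simp add: diag_app_def)
    next
      case False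
      then have "D t $ q = Sch t $ q" by (simp add: D_def)
      then show ?thesis using dq Smax0 by (simp add: diag_app_def)
    qed
  qed
  have Y_Suc: "Y (Suc t) = Y t + (\<rho> - D t)" for t by (simp add: Y_def)
  have bound: "norm (Tr \<delta> \<psi>) \<le> norm (Tr \<delta> g)"
    if ta: "filterlim ta at_top sequentially"
      and lim: "(\<lambda>a. inverse (real (ta a)) *\<^sub>R X (ta a)) \<longlonglongrightarrow> \<psi>"
      and Gg: "Good g" for ta :: "nat \<Rightarrow> nat" and \<psi> g
  proof -
    define c where "c = norm (Tr \<delta> g)"
    define wf where "wf t = norm (Tr \<delta> (Y t))" for t
    define Kg where "Kg = (\<Sum>q\<in>UNIV. \<delta> $ q * (\<bar>g $ q\<bar> + \<bar>\<rho> $ q\<bar> + Smax))"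
    have Kgnn: "0 \<le> Kg" unfolding Kg_def using delta_pos Smax0 by (intro sum_nonneg) (simp add: less_imp_le)
    have step1: "X t \<bullet> diag_app \<delta> (\<rho> - Sch t) \<le> X t \<bullet> diag_app \<delta> g" for t
    proof -
      define dX where "dX = diag_app \<delta> (X t)"
      have dX0: "\<forall>q. 0 \<le> dX $ q" unfolding dX_def diag_app_def using delta_pos Xnn
        by (simp add: less_imp_le)
      obtain s where s: "s \<in> SS" "dX \<bullet> (\<rho> - g) \<le> dX \<bullet> s" using Gg dX0 unfolding Good_def by blast
      have "s \<bullet> dX \<le> Sch t \<bullet> dX" using maxweight s(1) by (simp add: dX_def)
      then have "dX \<bullet> (\<rho> - Sch t) \<le> dX \<bullet> g" using s(2)
        by (simp add: inner_diff_right inner_commute)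
      then show ?thesis by (simp add: diag_sym dX_def)
    qed
    have step2: "E t \<bullet> diag_app \<delta> (g - (\<rho> - D t)) \<le> Kg * norm (E t)" for t
    proof -
      have "E t \<bullet> diag_app \<delta> (g - (\<rho> - D t)) \<le> norm (E t) * norm (diag_app \<delta> (g - (\<rho> - D t)))"
        by (rule norm_cauchy_schwarz)
      also have "norm (diag_app \<delta> (g - (\<rho> - D t))) \<le> Kg"
      proof -
        have "norm (diag_app \<delta> (g - (\<rho> - D t))) \<le> (\<Sum>q\<in>UNIV. \<bar>diag_app \<delta> (g - (\<rho> - D t)) $ q\<bar>)"
          by (rule norm_le_l1_cart)
        also have "\<dots> \<le> Kg" unfolding Kg_def
        proof (rule sum_mono)
          fix q
          have "\<bar>g $ q - (\<rho> $ q - D t $ q)\<bar> \<le> \<bar>g $ q\<bar> + \<bar>\<rho> $ q\<bar> + Smax"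
            using D0[of t q] DSmax[of t q] by linarith
          then show "\<bar>diag_app \<delta> (g - (\<rho> - D t)) $ q\<bar> \<le> \<delta> $ q * (\<bar>g $ q\<bar> + \<bar>\<rho> $ q\<bar> + Smax)"
            using delta_pos by (simp add: diag_app_def abs_mult less_imp_le mult_left_mono)
        qed
        finally show ?thesis .
      qed
      then have "norm (E t) * norm (diag_app \<delta> (g - (\<rho> - D t))) \<le> norm (E t) * Kg"
        by (simp add: mult_left_mono)
      finally show ?thesis by (simp add: mult.commute)
    qed
    have step3: "Y t \<bullet> diag_app \<delta> g \<le> c * wf t" for t
    proof -
      have "Y t \<bullet> diag_app \<delta> g = Tr \<delta> (Y t) \<bullet> Tr \<delta> g" using Tr_inner[OF delta_pos] .
      also have "\<dots> \<le> norm (Tr \<delta> (Y t)) * norm (Tr \<delta> g)" by (rule norm_cauchy_schwarz)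
      finally show ?thesis by (simp add: c_def wf_def mult.commute)
    qed
    have cross: "Y t \<bullet> diag_app \<delta> (\<rho> - D t) \<le> c * wf t + Kg * norm (E t) + C2" for t
    proof -
      have "Y t \<bullet> diag_app \<delta> (\<rho> - D t)
          = X t \<bullet> diag_app \<delta> (\<rho> - Sch t) + X t \<bullet> diag_app \<delta> (Sch t - D t) - E t \<bullet> diag_app \<delta> (\<rho> - D t)"
        by (simp add: XYE diag_diff inner_diff_right inner_add_left algebra_simps)
      also have "\<dots> \<le> X t \<bullet> diag_app \<delta> g + C2 - E t \<bullet> diag_app \<delta> (\<rho> - D t)"
        using step1[of t] XSD[of t] by linarith
      also have "\<dots> = Y t \<bullet> diag_app \<delta> g + E t \<bullet> diag_app \<delta> (g - (\<rho> - D t)) + C2"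
        by (simp add: XYE diag_diff diag_add inner_diff_right inner_add_left inner_add_right algebra_simps)
      also have "\<dots> \<le> c * wf t + Kg * norm (E t) + C2" using step2[of t] step3[of t] by linarith
      finally show ?thesis .
    qed
    have recur: "\<forall>t. (wf (Suc t))\<^sup>2 \<le> (wf t)\<^sup>2 + 2 * c * wf t + (2 * Kg * norm (E t)) + (2 * C2 + C3\<^sup>2)"
    proof
      fix t
      have eq: "(wf (Suc t))\<^sup>2 = (wf t)\<^sup>2 + 2 * (Y t \<bullet> diag_app \<delta> (\<rho> - D t)) + (norm (Tr \<delta> (\<rho> - D t)))\<^sup>2"
        unfolding wf_def Y_Suc Tr_add power2_norm_eq_inner Tr_inner[OF delta_pos]
        by (simp add: inner_add_left inner_add_right inner_commute)
      have "(norm (Tr \<delta> (\<rho> - D t)))\<^sup>2 \<le> C3\<^sup>2" using normTrD[of t] by (simp add: power_mono)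
      then show "(wf (Suc t))\<^sup>2 \<le> (wf t)\<^sup>2 + 2 * c * wf t + (2 * Kg * norm (E t)) + (2 * C2 + C3\<^sup>2)"
        using eq cross[of t] by linarith
    qed
    have w0: "\<forall>t. 0 \<le> wf t" by (simp add: wf_def)
    have c0: "0 \<le> c" by (simp add: c_def)
    have K0: "0 \<le> 2 * C2 + C3\<^sup>2" using C2nn by simp
    have E_eq: "inverse (real t) *\<^sub>R E t = avgA t - \<rho>" if "t > 0" for t
    proof -
      have "E t = (\<Sum>s<t. A s) - real t *\<^sub>R \<rho>" by (simp add: E_def sum_subtractf sum_constant_scaleR del: sum_constant)
      then show ?thesis using that by (simp add: avgA_def scaleR_diff_right)
    qed
    have E_lim: "(\<lambda>t. inverse (real t) *\<^sub>R E t) \<longlonglongrightarrow> 0"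
    proof -
      have "(\<lambda>t. avgA t - \<rho>) \<longlonglongrightarrow> \<rho> - \<rho>" by (intro tendsto_intros avgA_lim)
      moreover have "eventually (\<lambda>t. avgA t - \<rho> = inverse (real t) *\<^sub>R E t) sequentially"
        using eventually_gt_at_top[of "0::nat"] by eventually_elim (simp add: E_eq)
      ultimately show ?thesis using tendsto_cong by fastforce
    qed
    have e_small: "\<forall>\<epsilon>>0. eventually (\<lambda>t. 2 * Kg * norm (E t) \<le> \<epsilon> * real t) sequentially"
    proof (intro allI impI)
      fix \<epsilon> :: real assume eps: "\<epsilon> > 0"
      have "(\<lambda>t. norm (inverse (real t) *\<^sub>R E t)) \<longlonglongrightarrow> 0" using tendsto_norm_zero[OF E_lim] .
      then have ev: "eventually (\<lambda>t. norm (inverse (real t) *\<^sub>R E t) < \<epsilon> / (2 * Kg + 1)) sequentially"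
        using eps Kgnn by (intro order_tendstoD(2)) auto
      show "eventually (\<lambda>t. 2 * Kg * norm (E t) \<le> \<epsilon> * real t) sequentially"
        using ev eventually_gt_at_top[of "0::nat"]
      proof eventually_elim
        case (elim t)
        have pos: "0 < 2 * Kg + 1" using Kgnn by simp
        have "norm (E t) = real t * norm (inverse (real t) *\<^sub>R E t)" using elim(2) by simp
        also have "\<dots> \<le> real t * (\<epsilon> / (2 * Kg + 1))" using elim(1) by (intro mult_left_mono) auto
        finally have "(2 * Kg + 1) * norm (E t) \<le> \<epsilon> * real t" using pos
          by (simp add: field_simps)
        moreover have "2 * Kg * norm (E t) \<le> (2 * Kg + 1) * norm (E t)" by (simp add: algebra_simps)
        ultimately show ?case by linarith
      qed
    qed
    have Bd: "\<forall>t. wf t \<le> C3 * real t"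
    proof
      fix t
      have "wf t = norm (\<Sum>s<t. Tr \<delta> (\<rho> - D s))" by (simp add: wf_def Y_def Tr_sum)
      also have "\<dots> \<le> (\<Sum>s<t. norm (Tr \<delta> (\<rho> - D s)))" by (rule norm_sum)
      also have "\<dots> \<le> real t * C3" using sum_bounded_above[of "{..<t}" "\<lambda>s. norm (Tr \<delta> (\<rho> - D s))" C3] normTrD by simp
      finally show "wf t \<le> C3 * real t" by (simp add: mult.commute)
    qed
    have evw: "eventually (\<lambda>t. wf t \<le> (c + \<epsilon>) * real t) sequentially" if "\<epsilon> > 0" for \<epsilon>
      using gron[OF w0 c0 K0 recur e_small Bd that] .
    have Ylim: "(\<lambda>a. inverse (real (ta a)) *\<^sub>R Y (ta a)) \<longlonglongrightarrow> \<psi>"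
    proof -
      have "(\<lambda>a. inverse (real (ta a)) *\<^sub>R E (ta a)) \<longlonglongrightarrow> 0" using filterlim_compose[OF E_lim ta] .
      then have "(\<lambda>a. inverse (real (ta a)) *\<^sub>R X (ta a) - inverse (real (ta a)) *\<^sub>R E (ta a)) \<longlonglongrightarrow> \<psi> - 0"
        by (intro tendsto_intros lim)
      then show ?thesis by (simp add: XYE scaleR_add_right)
    qed
    have wlim: "(\<lambda>a. inverse (real (ta a)) * wf (ta a)) \<longlonglongrightarrow> norm (Tr \<delta> \<psi>)"
    proof -
      have "(\<lambda>a. norm (Tr \<delta> (inverse (real (ta a)) *\<^sub>R Y (ta a)))) \<longlonglongrightarrow> norm (Tr \<delta> \<psi>)"
        by (intro tendsto_norm bounded_linear.tendsto[OF Tr_bl] Ylim)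
      then show ?thesis by (simp add: Tr_scaleR wf_def)
    qed
    show ?thesis unfolding c_def[symmetric]
    proof (rule field_le_epsilon)
      fix \<epsilon> :: real assume eps: "0 < \<epsilon>"
      have "eventually (\<lambda>t. wf t \<le> (c + \<epsilon>) * real t \<and> t > 0) sequentially"
        using evw[OF eps] eventually_gt_at_top[of "0::nat"] by (rule eventually_conj)
      then have "eventually (\<lambda>a. wf (ta a) \<le> (c + \<epsilon>) * real (ta a) \<and> ta a > 0) sequentially"
        using eventually_compose_filterlim[OF _ ta] by blast
      then have "eventually (\<lambda>a. inverse (real (ta a)) * wf (ta a) \<le> c + \<epsilon>) sequentially"
        by eventually_elim (simp add: field_simps)
      then show "norm (Tr \<delta> \<psi>) \<le> c + \<epsilon>" using wlim by (intro tendsto_upperbound) auto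
    qed
  qed
  have Geta: "Good \<eta>" using Good_lim[OF tc_unbdd tc_lim] .
  have part1: "\<psi> = \<eta>"
    if ta: "filterlim ta at_top sequentially"
      and lim: "(\<lambda>a. inverse (real (ta a)) *\<^sub>R X (ta a)) \<longlonglongrightarrow> \<psi>" for ta :: "nat \<Rightarrow> nat" and \<psi>
  proof -
    have Gpsi: "Good \<psi>" using Good_lim[OF ta lim] .
    define m where "m = (1/2) *\<^sub>R (\<psi> + \<eta>)"
    have Gm: "Good m" unfolding Good_def
    proof (intro allI impI)
      fix w :: "real^'q" assume w0: "\<forall>q. 0 \<le> w $ q"
      obtain s1 where s1: "s1 \<in> SS" "w \<bullet> (\<rho> - \<psi>) \<le> w \<bullet> s1" using Gpsi w0 unfolding Good_def by blast
      obtain s2 where s2: "s2 \<in> SS" "w \<bullet> (\<rho> - \<eta>) \<le> w \<bullet> s2" using Geta w0 unfolding Good_def by blast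
      have eq: "w \<bullet> (\<rho> - m) = (w \<bullet> (\<rho> - \<psi>) + w \<bullet> (\<rho> - \<eta>)) / 2"
        by (simp add: m_def inner_diff_right inner_add_right algebra_simps)
      show "\<exists>s\<in>SS. w \<bullet> (\<rho> - m) \<le> w \<bullet> s"
      proof (cases "w \<bullet> s1 \<le> w \<bullet> s2")
        case True then show ?thesis using s1 s2 eq by (intro bexI[of _ s2]) auto
      next
        case False then show ?thesis using s1 s2 eq by (intro bexI[of _ s1]) auto
      qed
    qed
    define a where "a = Tr \<delta> \<psi>"
    define b where "b = Tr \<delta> \<eta>"
    have Trm: "Tr \<delta> m = (1/2) *\<^sub>R (a + b)" by (simp add: m_def a_def b_def Tr_scaleR Tr_add)
    have b1: "norm a \<le> norm (Tr \<delta> m)" using bound[OF ta lim Gm] by (simp add: a_def)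
    have b2: "norm b \<le> norm (Tr \<delta> m)" using bound[OF tc_unbdd tc_lim Gm] by (simp add: b_def)
    have sq1: "(norm a)\<^sup>2 \<le> (norm (Tr \<delta> m))\<^sup>2" using b1 by (simp add: power_mono)
    have sq2: "(norm b)\<^sup>2 \<le> (norm (Tr \<delta> m))\<^sup>2" using b2 by (simp add: power_mono)
    have par: "(norm (Tr \<delta> m))\<^sup>2 = ((norm a)\<^sup>2 + (norm b)\<^sup>2) / 2 - (norm (a - b))\<^sup>2 / 4"
      unfolding Trm power2_norm_eq_inner
      by (simp add: inner_add_left inner_add_right inner_diff_left inner_diff_right inner_commute algebra_simps) (simp add: field_simps)
    have "(norm (a - b))\<^sup>2 \<le> 0"
    proof -
      define P where "P = (norm a)\<^sup>2"
      define Q where "Q = (norm b)\<^sup>2"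
      define R where "R = (norm (Tr \<delta> m))\<^sup>2"
      define S where "S = (norm (a - b))\<^sup>2"
      have "P \<le> R" "Q \<le> R" "R = (P + Q) / 2 - S / 4" using sq1 sq2 par by (simp_all add: P_def Q_def R_def S_def)
      then have "S \<le> 0" by (simp add: field_simps)
      then show ?thesis by (simp add: S_def)
    qed
    then have "a - b = 0" by simp
    then have "Tr \<delta> (\<psi> - \<eta>) = 0" by (simp add: a_def b_def Tr_diff)
    then have "\<psi> - \<eta> = 0" using Tr_zero[OF delta_pos] by blast
    then show ?thesis by simp
  qed
  have bnd: "bounded (range (\<lambda>t. inverse (real t) *\<^sub>R X t))"
    unfolding bounded_iff
  proof (intro exI[of _ "\<Sum>q\<in>UNIV. Abar $ q"] ballI)
    fix x assume "x \<in> range (\<lambda>t. inverse (real t) *\<^sub>R X t)"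
    then obtain t where xt: "x = inverse (real t) *\<^sub>R X t" by auto
    have "norm x \<le> (\<Sum>q\<in>UNIV. \<bar>x $ q\<bar>)" by (rule norm_le_l1_cart)
    also have "\<dots> \<le> (\<Sum>q\<in>UNIV. Abar $ q)"
    proof (rule sum_mono)
      fix q
      have Ab0: "0 \<le> Abar $ q" using A_bnd by (meson order.trans)
      have "X t $ q \<le> (\<Sum>s<t. A s $ q)"
        using Xsum[of t] D0 by (simp add: sum_nonneg)
      also have "\<dots> \<le> real t * Abar $ q"
        using sum_bounded_above[of "{..<t}" "\<lambda>s. A s $ q" "Abar $ q"] A_bnd by simp
      finally have Xq: "X t $ q \<le> real t * Abar $ q" .
      show "\<bar>x $ q\<bar> \<le> Abar $ q"
      proof (cases "t = 0")
        case True then show ?thesis using xt Ab0 by simp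
      next
        case False
        then have "inverse (real t) * X t $ q \<le> inverse (real t) * (real t * Abar $ q)"
          using Xq by (intro mult_left_mono) auto
        moreover have "inverse (real t) * (real t * Abar $ q) = Abar $ q" using False by simp
        moreover have "0 \<le> inverse (real t) * X t $ q" using Xnn[of t q] by simp
        ultimately show ?thesis using xt by (simp add: divide_inverse mult.commute)
      qed
    qed
    finally show "norm x \<le> (\<Sum>q\<in>UNIV. Abar $ q)" .
  qed
  have part2: "(\<lambda>t. inverse (real t) *\<^sub>R X t) \<longlonglongrightarrow> \<eta>"
  proof (rule subseq_conv[OF bnd])
    fix r l assume r: "strict_mono (r :: nat \<Rightarrow> nat)"
      and l: "((\<lambda>t. inverse (real t) *\<^sub>R X t) \<circ> r) \<longlonglongrightarrow> l"
    show "l = \<eta>" using part1[OF filterlim_subseq[OF r]] l by (simp add: o_def)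
  qed
  show ?thesis using part1 part2 by blast
qed
end
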